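(* If $f\ge 0$ is a random variable, then its quantization $\widehat f$ is a positive operator on $H$, i.e. $\langle\widehat f u,u\rangle\ge 0$ for all $u\in H$.
   Context: $(\Omega,\mathcal{A},\nu)$ is a probability space and $H=L_2(\Omega,\mathcal{A},\nu)$ is the complex Hilbert space with inner product $\langle f,g\rangle=\int\bar f g\,d\nu$. A random variable is a real-valued $f\in H$. For a random variable $f\ge 0$, its quantization $\widehat f$ is the operator on $H$ given by $(\widehat f u)(y)=\int\min[f(x),f(y)]\,u(x)\,d\nu(x)$. *)

theory Defs
  imports "HOL-Probability.Probability" "HOL-Library.Complex_Order"
begin

text \<open>The complex Hilbert space H = L2(Omega, A, nu), represented by its
  (measurable, square-integrable) representative functions.\<close>
definition L2 :: "'a measure \<Rightarrow> ('a \<Rightarrow> complex) set" where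
  "L2 M = {u. u \<in> borel_measurable M \<and> integrable M (\<lambda>x. (cmod (u x))\<^sup>2)}"

definition l2_inner :: "'a measure \<Rightarrow> ('a \<Rightarrow> complex) \<Rightarrow> ('a \<Rightarrow> complex) \<Rightarrow> complex" where
  "l2_inner M u v = (LINT x|M. cnj (u x) * v x)"

definition quantization :: "'a measure \<Rightarrow> ('a \<Rightarrow> real) \<Rightarrow> ('a \<Rightarrow> complex) \<Rightarrow> ('a \<Rightarrow> complex)" where
  "quantization M f u = (\<lambda>y. LINT x|M. complex_of_real (min (f x) (f y)) * u x)"

end

theory Submission
  imports Defs
begin

lemma borel_measurable_cnj_comp[measurable (raw)]:
  fixes g :: "'a \<Rightarrow> complex"
  assumes "g \<in> borel_measurable M"
  shows "(\<lambda>x. cnj (g x)) \<in> borel_measurable M"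
proof -
  have "cnj \<in> borel_measurable borel"
    by (rule borel_measurable_continuous_onI) (intro continuous_intros)
  from measurable_compose[OF assms this] show ?thesis by (simp add: comp_def)
qed

lemma prod_integral_mult:
  fixes g h :: "_ \<Rightarrow> 'b::{real_normed_field, banach, second_countable_topology}"
  assumes "sigma_finite_measure M1" "sigma_finite_measure M2"
    and g: "integrable M1 g" and h: "integrable M2 h"
  shows "integrable (M1 \<Otimes>\<^sub>M M2) (\<lambda>(x,y). g x * h y)"
    and "integral\<^sup>L (M1 \<Otimes>\<^sub>M M2) (\<lambda>(x,y). g x * h y) = integral\<^sup>L M1 g * integral\<^sup>L M2 h"
proof -
  interpret pair_sigma_finite M1 M2 using assms(1,2) by (simp add: pair_sigma_finite_def)
  have [measurable]: "g \<in> borel_measurable M1" "h \<in> borel_measurable M2" using g h by auto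
  show I: "integrable (M1 \<Otimes>\<^sub>M M2) (\<lambda>(x,y). g x * h y)"
  proof (rule Fubini_integrable)
    show "(\<lambda>(x,y). g x * h y) \<in> borel_measurable (M1 \<Otimes>\<^sub>M M2)" by measurable
    have "integrable M1 (\<lambda>x. norm (g x) * (\<integral>y. norm (h y) \<partial>M2))"
      using g by (intro integrable_mult_left) auto
    then show "integrable M1 (\<lambda>x. \<integral>y. norm (case (x, y) of (x, y) \<Rightarrow> g x * h y) \<partial>M2)"
      by (simp add: norm_mult)
    show "AE x in M1. integrable M2 (\<lambda>y. case (x, y) of (x, y) \<Rightarrow> g x * h y)"
      using h by auto
  qed
  have "integral\<^sup>L (M1 \<Otimes>\<^sub>M M2) (\<lambda>(x,y). g x * h y) = (\<integral>x. (\<integral>y. g x * h y \<partial>M2) \<partial>M1)"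
    using integral_fst[of "\<lambda>x y. g x * h y"] I by simp
  also have "\<dots> = (\<integral>x. g x * integral\<^sup>L M2 h \<partial>M1)" by simp
  also have "\<dots> = integral\<^sup>L M1 g * integral\<^sup>L M2 h" by simp
  finally show "integral\<^sup>L (M1 \<Otimes>\<^sub>M M2) (\<lambda>(x,y). g x * h y) = integral\<^sup>L M1 g * integral\<^sup>L M2 h" .
qed

lemma L2_facts:
  assumes "prob_space M" "u \<in> L2 M"
  shows "u \<in> borel_measurable M" "integrable M (\<lambda>x. cmod (u x))"
proof -
  interpret prob_space M by fact
  show um: "u \<in> borel_measurable M" using assms(2) by (simp add: L2_def)
  have i2: "integrable M (\<lambda>x. (cmod (u x))\<^sup>2)" using assms(2) by (simp add: L2_def)
  show "integrable M (\<lambda>x. cmod (u x))"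
  proof (rule Bochner_Integration.integrable_bound[where f="\<lambda>x. 1 + (cmod (u x))\<^sup>2"])
    show "integrable M (\<lambda>x. 1 + (cmod (u x))\<^sup>2)" using i2 by simp
    show "(\<lambda>x. cmod (u x)) \<in> borel_measurable M" using um by measurable
    show "AE x in M. norm (cmod (u x)) \<le> norm (1 + (cmod (u x))\<^sup>2)"
    proof (rule AE_I2)
      fix x
      have "0 \<le> (cmod (u x) - 1)\<^sup>2" by simp
      then have a: "2 * cmod (u x) \<le> 1 + (cmod (u x))\<^sup>2"
        unfolding power2_eq_square by (simp add: algebra_simps)
      have b: "0 \<le> cmod (u x)" by simp
      have "cmod (u x) \<le> 1 + (cmod (u x))\<^sup>2" using a b by linarith
      then show "norm (cmod (u x)) \<le> norm (1 + (cmod (u x))\<^sup>2)" by simp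
    qed
  qed
qed

lemma L2_f_facts:
  assumes "prob_space M" "u \<in> L2 M" "f \<in> borel_measurable M" "integrable M (\<lambda>x. (f x)\<^sup>2)"
  shows "integrable M (\<lambda>x. \<bar>f x\<bar> * cmod (u x))"
proof -
  interpret prob_space M by fact
  have um[measurable]: "u \<in> borel_measurable M" using assms(2) by (simp add: L2_def)
  have [measurable]: "f \<in> borel_measurable M" by fact
  have i2: "integrable M (\<lambda>x. (cmod (u x))\<^sup>2)" using assms(2) by (simp add: L2_def)
  show ?thesis
  proof (rule Bochner_Integration.integrable_bound[where f="\<lambda>x. (f x)\<^sup>2 + (cmod (u x))\<^sup>2"])
    show "integrable M (\<lambda>x. (f x)\<^sup>2 + (cmod (u x))\<^sup>2)" using i2 assms(4) by simp
    show "(\<lambda>x. \<bar>f x\<bar> * cmod (u x)) \<in> borel_measurable M" by measurable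
    show "AE x in M. norm (\<bar>f x\<bar> * cmod (u x)) \<le> norm ((f x)\<^sup>2 + (cmod (u x))\<^sup>2)"
    proof (rule AE_I2)
      fix x
      have a: "2 * (\<bar>f x\<bar> * cmod (u x)) \<le> (f x)\<^sup>2 + (cmod (u x))\<^sup>2"
        using sum_squares_bound[of "\<bar>f x\<bar>" "cmod (u x)"] by (simp add: power2_abs)
      have b: "0 \<le> \<bar>f x\<bar> * cmod (u x)" by simp
      have "\<bar>f x\<bar> * cmod (u x) \<le> (f x)\<^sup>2 + (cmod (u x))\<^sup>2" using a b by linarith
      then show "norm (\<bar>f x\<bar> * cmod (u x)) \<le> norm ((f x)\<^sup>2 + (cmod (u x))\<^sup>2)" using b by simp
    qed
  qed
qed

theorem theorem3p2:
  fixes M :: "'a measure" and f :: "'a \<Rightarrow> real"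
  assumes "prob_space M"
    and "f \<in> borel_measurable M"
    and "integrable M (\<lambda>x. (f x)\<^sup>2)"
    and "AE x in M. f x \<ge> 0"
  shows "\<forall>u \<in> L2 M. l2_inner M (quantization M f u) u \<ge> 0"
proof
  fix u assume uL2: "u \<in> L2 M"
  interpret P: prob_space M by fact
  interpret MM: pair_sigma_finite M M ..
  have sfM: "sigma_finite_measure M" by unfold_locales
  have "prob_space (M \<Otimes>\<^sub>M M)" by (simp add: P.prob_space_axioms prob_space_pair)
  then have sfMM: "sigma_finite_measure (M \<Otimes>\<^sub>M M)"
    by (simp add: prob_space_imp_sigma_finite)
  interpret T: pair_sigma_finite "M \<Otimes>\<^sub>M M" lborel
    using sfMM lborel.sigma_finite_measure_axioms by (simp add: pair_sigma_finite_def)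
  have um[measurable]: "u \<in> borel_measurable M"
    and ui: "integrable M (\<lambda>x. cmod (u x))" using L2_facts[OF assms(1) uL2] by auto
  have fui: "integrable M (\<lambda>x. \<bar>f x\<bar> * cmod (u x))"
    using L2_f_facts[OF assms(1) uL2 assms(2,3)] .
  have fm[measurable]: "f \<in> borel_measurable M" by fact
  define fp where "fp x = max 0 (f x)" for x
  have fpm[measurable]: "fp \<in> borel_measurable M" unfolding fp_def by measurable
  have [measurable]: "(\<lambda>p. u (fst p)) \<in> borel_measurable (M \<Otimes>\<^sub>M M)"
    "(\<lambda>p. u (snd p)) \<in> borel_measurable (M \<Otimes>\<^sub>M M)"
    "(\<lambda>p. f (fst p)) \<in> borel_measurable (M \<Otimes>\<^sub>M M)"
    "(\<lambda>p. f (snd p)) \<in> borel_measurable (M \<Otimes>\<^sub>M M)"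
    "(\<lambda>p. fp (fst p)) \<in> borel_measurable (M \<Otimes>\<^sub>M M)"
    "(\<lambda>p. fp (snd p)) \<in> borel_measurable (M \<Otimes>\<^sub>M M)"
    by (auto intro!: measurable_compose[OF measurable_fst] measurable_compose[OF measurable_snd])
  have fp_nonneg: "0 \<le> fp x" for x unfolding fp_def by simp
  have fp_le: "\<bar>fp x\<bar> \<le> \<bar>f x\<bar>" for x unfolding fp_def by simp
  define A where "A g = (\<lambda>p. cnj (complex_of_real (min (g (fst p)) (g (snd p))) * u (fst p)) * u (snd p))"
    for g :: "'a \<Rightarrow> real"
  have Afm[measurable]: "A f \<in> borel_measurable (M \<Otimes>\<^sub>M M)" unfolding A_def by measurable
  have Afpm[measurable]: "A fp \<in> borel_measurable (M \<Otimes>\<^sub>M M)" unfolding A_def by measurable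
  define B where "B = (\<lambda>p. \<bar>f (fst p)\<bar> * cmod (u (fst p)) * cmod (u (snd p))
     + cmod (u (fst p)) * (\<bar>f (snd p)\<bar> * cmod (u (snd p))))"
  have Bi: "integrable (M \<Otimes>\<^sub>M M) B"
  proof -
    have i1: "integrable (M \<Otimes>\<^sub>M M) (\<lambda>(x,y). (\<bar>f x\<bar> * cmod (u x)) * cmod (u y))"
      by (rule prod_integral_mult(1)[OF sfM sfM fui ui])
    have i2: "integrable (M \<Otimes>\<^sub>M M) (\<lambda>(x,y). cmod (u x) * (\<bar>f y\<bar> * cmod (u y)))"
      by (rule prod_integral_mult(1)[OF sfM sfM ui fui])
    have "B = (\<lambda>p. (\<lambda>(x,y). (\<bar>f x\<bar> * cmod (u x)) * cmod (u y)) p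
              + (\<lambda>(x,y). cmod (u x) * (\<bar>f y\<bar> * cmod (u y))) p)"
      by (auto simp: B_def fun_eq_iff split: prod.splits)
    then show ?thesis using Bochner_Integration.integrable_add[OF i1 i2] by simp
  qed
  have bound: "norm (A g p) \<le> B p" if g: "\<And>z. \<bar>g z\<bar> \<le> \<bar>f z\<bar>" for g p
  proof -
    obtain x y where p: "p = (x,y)" by (cases p)
    have m: "\<bar>min (g x) (g y)\<bar> \<le> \<bar>f x\<bar> + \<bar>f y\<bar>"
      using g[of x] g[of y] by (auto simp: min_def)
    have "norm (A g p) = \<bar>min (g x) (g y)\<bar> * (cmod (u x) * cmod (u y))"
      by (simp add: A_def p norm_mult)
    also have "\<dots> \<le> (\<bar>f x\<bar> + \<bar>f y\<bar>) * (cmod (u x) * cmod (u y))"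
      by (rule mult_right_mono[OF m]) simp
    also have "\<dots> = B p" by (simp add: B_def p algebra_simps)
    finally show ?thesis .
  qed
  have B_nonneg: "0 \<le> B p" for p unfolding B_def by simp
  have Afi: "integrable (M \<Otimes>\<^sub>M M) (A f)"
    by (rule Bochner_Integration.integrable_bound[OF Bi Afm])
       (rule AE_I2, use bound[of f] B_nonneg in auto)
  have Afpi: "integrable (M \<Otimes>\<^sub>M M) (A fp)"
    by (rule Bochner_Integration.integrable_bound[OF Bi Afpm])
       (rule AE_I2, use bound[of fp] fp_le B_nonneg in auto)
  have Q1: "l2_inner M (quantization M f u) u = (\<integral>y. (\<integral>x. A f (x,y) \<partial>M) \<partial>M)"
    unfolding l2_inner_def quantization_def A_def
    by (intro Bochner_Integration.integral_cong) (simp_all only: fst_conv snd_conv integral_mult_left_zero Bochner_Integration.integral_cnj)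
  also have "\<dots> = integral\<^sup>L (M \<Otimes>\<^sub>M M) (A f)"
    using MM.integral_snd[of "\<lambda>x y. A f (x,y)"] Afi by simp
  also have "\<dots> = integral\<^sup>L (M \<Otimes>\<^sub>M M) (A fp)"
  proof (rule integral_cong_AE[OF Afm Afpm])
    have "AE x in M. AE y in M. 0 \<le> f x \<and> 0 \<le> f y"
      using assms(4)
    proof eventually_elim
      case (elim x)
      then show ?case using assms(4) by (auto elim!: eventually_mono)
    qed
    moreover have "{p \<in> space (M \<Otimes>\<^sub>M M). 0 \<le> f (fst p) \<and> 0 \<le> f (snd p)} \<in> sets (M \<Otimes>\<^sub>M M)"
      by measurable
    ultimately have "AE p in M \<Otimes>\<^sub>M M. 0 \<le> f (fst p) \<and> 0 \<le> f (snd p)"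
      using MM.AE_pair_measure[of "\<lambda>p. 0 \<le> f (fst p) \<and> 0 \<le> f (snd p)"] by simp
    then show "AE p in M \<Otimes>\<^sub>M M. A f p = A fp p"
      by eventually_elim (simp add: A_def fp_def)
  qed
  finally have Q2: "l2_inner M (quantization M f u) u = integral\<^sup>L (M \<Otimes>\<^sub>M M) (A fp)" .
  define Ind where "Ind z t = (if 0 \<le> t \<and> t < fp z then 1 else 0 :: real)" for z t
  define G where "G p t = complex_of_real (Ind (fst p) t * Ind (snd p) t) * (cnj (u (fst p)) * u (snd p))"
    for p t
  have Ind_prod: "Ind x t * Ind y t = indicator {0..<min (fp x) (fp y)} t" for x y t
    by (simp add: Ind_def indicator_def)
  have Gm[measurable]: "(\<lambda>(p,t). G p t) \<in> borel_measurable ((M \<Otimes>\<^sub>M M) \<Otimes>\<^sub>M lborel)"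
    unfolding G_def Ind_def by measurable
  have G_eq: "G p = (\<lambda>t. complex_of_real (indicator {0..<min (fp (fst p)) (fp (snd p))} t)
      * (cnj (u (fst p)) * u (snd p)))" for p
    by (simp add: G_def Ind_prod fun_eq_iff)
  have min_nonneg: "0 \<le> min (fp x) (fp y)" for x y using fp_nonneg by simp
  have intG: "integrable lborel (G p)" for p
    unfolding G_eq using min_nonneg[of "fst p" "snd p"]
    by (intro integrable_mult_left integrable_of_real integrable_real_indicator) auto
  have intG_eq: "(\<integral>t. G p t \<partial>lborel) = A fp p" for p
    using min_nonneg[of "fst p" "snd p"] by (simp add: G_eq A_def)
  have intnG_eq: "(\<integral>t. norm (G p t) \<partial>lborel) = norm (A fp p)" for p
  proof -
    have "(\<lambda>t. norm (G p t)) = (\<lambda>t. indicator {0..<min (fp (fst p)) (fp (snd p))} t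
       * (cmod (u (fst p)) * cmod (u (snd p))))"
      by (simp add: G_eq norm_mult fun_eq_iff)
    then show ?thesis using min_nonneg[of "fst p" "snd p"] by (simp add: A_def norm_mult)
  qed
  have Gint: "integrable ((M \<Otimes>\<^sub>M M) \<Otimes>\<^sub>M lborel) (\<lambda>(p,t). G p t)"
  proof (rule T.Fubini_integrable)
    show "(\<lambda>(p,t). G p t) \<in> borel_measurable ((M \<Otimes>\<^sub>M M) \<Otimes>\<^sub>M lborel)" by (rule Gm)
    show "integrable (M \<Otimes>\<^sub>M M) (\<lambda>p. \<integral>t. norm (case (p, t) of (p, t) \<Rightarrow> G p t) \<partial>lborel)"
      using integrable_norm[OF Afpi] by (simp add: intnG_eq)
    show "AE p in M \<Otimes>\<^sub>M M. integrable lborel (\<lambda>t. case (p, t) of (p, t) \<Rightarrow> G p t)"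
      using intG by simp
  qed
  have "integral\<^sup>L (M \<Otimes>\<^sub>M M) (A fp) = (\<integral>p. (\<integral>t. G p t \<partial>lborel) \<partial>(M \<Otimes>\<^sub>M M))"
    by (simp add: intG_eq)
  also have "\<dots> = (\<integral>t. (\<integral>p. G p t \<partial>(M \<Otimes>\<^sub>M M)) \<partial>lborel)"
    using T.Fubini_integral[of "\<lambda>p t. G p t"] Gint by simp
  finally have Q3: "integral\<^sup>L (M \<Otimes>\<^sub>M M) (A fp) = (\<integral>t. (\<integral>p. G p t \<partial>(M \<Otimes>\<^sub>M M)) \<partial>lborel)" .
  define F where "F t = (\<integral>y. complex_of_real (Ind y t) * u y \<partial>M)" for t
  have inner: "(\<integral>p. G p t \<partial>(M \<Otimes>\<^sub>M M)) = complex_of_real ((cmod (F t))\<^sup>2)" for t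
  proof -
    have Indm[measurable]: "(\<lambda>y. Ind y t) \<in> borel_measurable M" unfolding Ind_def by measurable
    have Ind01: "\<bar>Ind y t\<bar> \<le> 1" for y by (simp add: Ind_def)
    have Hi: "integrable M (\<lambda>y. complex_of_real (Ind y t) * u y)"
    proof (rule Bochner_Integration.integrable_bound[where f="\<lambda>x. cmod (u x)"])
      show "integrable M (\<lambda>x. cmod (u x))" by (rule ui)
      show "(\<lambda>y. complex_of_real (Ind y t) * u y) \<in> borel_measurable M" by measurable
      show "AE x in M. norm (complex_of_real (Ind x t) * u x) \<le> norm (cmod (u x))"
      proof (rule AE_I2)
        fix x
        have "\<bar>Ind x t\<bar> * cmod (u x) \<le> 1 * cmod (u x)"
          by (rule mult_right_mono[OF Ind01]) simp
        then show "norm (complex_of_real (Ind x t) * u x) \<le> norm (cmod (u x))"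
          by (simp add: norm_mult)
      qed
    qed
    have Hci: "integrable M (\<lambda>x. cnj (complex_of_real (Ind x t) * u x))"
      by (rule integrable_cnj[OF Hi])
    have "(\<integral>p. G p t \<partial>(M \<Otimes>\<^sub>M M)) = integral\<^sup>L (M \<Otimes>\<^sub>M M)
        (\<lambda>(x,y). cnj (complex_of_real (Ind x t) * u x) * (complex_of_real (Ind y t) * u y))"
      by (intro Bochner_Integration.integral_cong) (auto simp: G_def mult_ac)
    also have "\<dots> = (\<integral>x. cnj (complex_of_real (Ind x t) * u x) \<partial>M) * (\<integral>y. complex_of_real (Ind y t) * u y \<partial>M)"
      by (rule prod_integral_mult(2)[OF sfM sfM Hci Hi])
    also have "\<dots> = cnj (F t) * F t"
      by (simp only: F_def Bochner_Integration.integral_cnj)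
    also have "\<dots> = complex_of_real ((cmod (F t))\<^sup>2)"
      using complex_norm_square[of "F t"] by (simp only: mult.commute)
    finally show ?thesis .
  qed
  have nn: "0 \<le> (\<integral>t. (cmod (F t))\<^sup>2 \<partial>lborel)"
    by (rule Bochner_Integration.integral_nonneg) simp
  have "l2_inner M (quantization M f u) u = (\<integral>t. complex_of_real ((cmod (F t))\<^sup>2) \<partial>lborel)"
    using Q2 Q3 inner by (simp only:)
  also have "\<dots> = complex_of_real (\<integral>t. (cmod (F t))\<^sup>2 \<partial>lborel)"
    by (rule integral_complex_of_real)
  finally have "l2_inner M (quantization M f u) u = complex_of_real (\<integral>t. (cmod (F t))\<^sup>2 \<partial>lborel)" .
  then show "l2_inner M (quantization M f u) u \<ge> 0"
    using nn by (simp add: less_eq_complex_def)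
qed

end
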